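(* Let $H$ and $F$ be $r$-uniform hypergraphs. The following are equivalent: (1) there is a homomorphism from $H$ to $F$; (2) there exists a function $g:i(F)\to i(H)$ such that the sets $A_x=\bigcap_{I\in i(F),\,x\in I} g(I)$, for $x\in V(F)$, cover $V(H)$, i.e. $\bigcup_{x\in V(F)}A_x=V(H)$.
   Context: A hypergraph $H$ has a finite vertex set $V(H)$ and a set $E(H)$ of subsets of $V(H)$; it is $r$-uniform if every edge has exactly $r$ elements. A set of vertices is independent if it contains no edge; $i(H)$ is the family of inclusion-wise maximal independent sets of $H$. A map $f:V(H)\to V(F)$ is a homomorphism if for every edge $h$ of $H$ the image $f(h)$ is an edge of $F$. An intersection over an empty family of subsets of $V(H)$ is taken to be $V(H)$. *)

theory Defs
  imports Main "HOL-Library.FuncSet"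
begin

definition hypergraph :: "'a set \<Rightarrow> 'a set set \<Rightarrow> bool" where
  "hypergraph V E \<longleftrightarrow> finite V \<and> (\<forall>e\<in>E. e \<subseteq> V)"

definition uniform_hypergraph :: "nat \<Rightarrow> 'a set \<Rightarrow> 'a set set \<Rightarrow> bool" where
  "uniform_hypergraph r V E \<longleftrightarrow> hypergraph V E \<and> (\<forall>e\<in>E. card e = r)"

definition independent :: "'a set \<Rightarrow> 'a set set \<Rightarrow> 'a set \<Rightarrow> bool" where
  "independent V E S \<longleftrightarrow> S \<subseteq> V \<and> (\<forall>e\<in>E. \<not> e \<subseteq> S)"

definition max_indep :: "'a set \<Rightarrow> 'a set set \<Rightarrow> 'a set set" where
  "max_indep V E = {S. independent V E S \<and> (\<forall>T. independent V E T \<and> S \<subseteq> T \<longrightarrow> T = S)}"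

definition hyp_hom :: "'a set \<Rightarrow> 'a set set \<Rightarrow> 'b set \<Rightarrow> 'b set set \<Rightarrow> ('a \<Rightarrow> 'b) \<Rightarrow> bool" where
  "hyp_hom VH EH VF EF f \<longleftrightarrow> f \<in> VH \<rightarrow> VF \<and> (\<forall>h\<in>EH. f ` h \<in> EF)"

text \<open>A_x: intersection of g(I) over I in i(F) containing x; the empty intersection is V(H).\<close>
definition A_set :: "'a set \<Rightarrow> 'b set set \<Rightarrow> ('b set \<Rightarrow> 'a set) \<Rightarrow> 'b \<Rightarrow> 'a set" where
  "A_set VH iF g x = VH \<inter> \<Inter> {g I | I. I \<in> iF \<and> x \<in> I}"

end

theory Submission
  imports Defs
begin

lemma ext_max:
  assumes "finite V" "independent V E S"
  shows "\<exists>M\<in>max_indep V E. S \<subseteq> M"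
proof -
  let ?C = "{T. independent V E T \<and> S \<subseteq> T}"
  have fin: "finite ?C"
    by (rule finite_subset[of _ "Pow V"]) (auto simp: independent_def assms(1))
  have ne: "?C \<noteq> {}" using assms(2) by auto
  obtain M where M: "M \<in> ?C" "\<forall>b\<in>?C. M \<le> b \<longrightarrow> M = b"
    using finite_has_maximal[OF fin ne] by blast
  have "M \<in> max_indep V E"
    unfolding max_indep_def using M by auto
  thus ?thesis using M by blast
qed

theorem mainTheorem12:
  fixes VH :: "'a set" and EH :: "'a set set" and VF :: "'b set" and EF :: "'b set set"
  assumes "uniform_hypergraph r VH EH" and "uniform_hypergraph r VF EF"
  shows "(\<exists>f. hyp_hom VH EH VF EF f) \<longleftrightarrow>
         (\<exists>g. g \<in> max_indep VF EF \<rightarrow> max_indep VH EH \<and>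
              (\<Union>x\<in>VF. A_set VH (max_indep VF EF) g x) = VH)"
proof
  have finH: "finite VH" and subH: "\<forall>e\<in>EH. e \<subseteq> VH" and cardH: "\<forall>e\<in>EH. card e = r"
    using assms(1) by (auto simp: uniform_hypergraph_def hypergraph_def)
  have finF: "finite VF" and subF: "\<forall>e\<in>EF. e \<subseteq> VF" and cardF: "\<forall>e\<in>EF. card e = r"
    using assms(2) by (auto simp: uniform_hypergraph_def hypergraph_def)
  {
    assume "\<exists>f. hyp_hom VH EH VF EF f"
    then obtain f where f: "f \<in> VH \<rightarrow> VF" "\<forall>h\<in>EH. f ` h \<in> EF"
      by (auto simp: hyp_hom_def)
    have ind: "independent VH EH (VH \<inter> f -` I)" if "I \<in> max_indep VF EF" for I
    proof -
      have I: "\<forall>e\<in>EF. \<not> e \<subseteq> I" using that by (auto simp: max_indep_def independent_def)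
      show ?thesis unfolding independent_def
      proof (intro conjI ballI)
        fix h assume h: "h \<in> EH"
        show "\<not> h \<subseteq> VH \<inter> f -` I"
        proof
          assume "h \<subseteq> VH \<inter> f -` I"
          hence "f ` h \<subseteq> I" by auto
          thus False using I f(2) h by blast
        qed
      qed auto
    qed
    define g where "g I = (SOME M. M \<in> max_indep VH EH \<and> VH \<inter> f -` I \<subseteq> M)" for I
    have g: "g I \<in> max_indep VH EH \<and> VH \<inter> f -` I \<subseteq> g I" if "I \<in> max_indep VF EF" for I
      unfolding g_def by (rule someI_ex) (use ext_max[OF finH ind[OF that]] in blast)
    have "(\<Union>x\<in>VF. A_set VH (max_indep VF EF) g x) = VH"
    proof
      show "(\<Union>x\<in>VF. A_set VH (max_indep VF EF) g x) \<subseteq> VH" by (auto simp: A_set_def)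
      show "VH \<subseteq> (\<Union>x\<in>VF. A_set VH (max_indep VF EF) g x)"
      proof
        fix v assume v: "v \<in> VH"
        have "v \<in> A_set VH (max_indep VF EF) g (f v)"
          unfolding A_set_def using v g by auto
        thus "v \<in> (\<Union>x\<in>VF. A_set VH (max_indep VF EF) g x)" using f(1) v by blast
      qed
    qed
    thus "\<exists>g. g \<in> max_indep VF EF \<rightarrow> max_indep VH EH \<and>
              (\<Union>x\<in>VF. A_set VH (max_indep VF EF) g x) = VH"
      using g by blast
  }
  {
    assume "\<exists>g. g \<in> max_indep VF EF \<rightarrow> max_indep VH EH \<and>
              (\<Union>x\<in>VF. A_set VH (max_indep VF EF) g x) = VH"
    then obtain g where g: "g \<in> max_indep VF EF \<rightarrow> max_indep VH EH"
      and cov: "(\<Union>x\<in>VF. A_set VH (max_indep VF EF) g x) = VH" by blast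
    define f where "f v = (SOME x. x \<in> VF \<and> v \<in> A_set VH (max_indep VF EF) g x)" for v
    have fv: "f v \<in> VF \<and> v \<in> A_set VH (max_indep VF EF) g (f v)" if "v \<in> VH" for v
      unfolding f_def by (rule someI_ex) (use cov that in blast)
    have "\<forall>h\<in>EH. f ` h \<in> EF"
    proof
      fix h assume h: "h \<in> EH"
      show "f ` h \<in> EF"
      proof (rule ccontr)
        assume nE: "f ` h \<notin> EF"
        have finh: "finite h" using h subH finH finite_subset by blast
        have sub: "f ` h \<subseteq> VF" using fv h subH by blast
        have "independent VF EF (f ` h)" unfolding independent_def
        proof (intro conjI ballI sub)
          fix e assume e: "e \<in> EF"
          show "\<not> e \<subseteq> f ` h"
          proof
            assume es: "e \<subseteq> f ` h"
            have "card (f ` h) \<le> card h" using card_image_le finh by blast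
            also have "\<dots> = card e" using cardH cardF h e by simp
            finally have "e = f ` h" using card_seteq[OF finite_imageI[OF finh] es] by simp
            thus False using nE e by simp
          qed
        qed
        then obtain I where I: "I \<in> max_indep VF EF" "f ` h \<subseteq> I"
          using ext_max[OF finF] by blast
        have "h \<subseteq> g I"
        proof
          fix v assume v: "v \<in> h"
          hence vH: "v \<in> VH" using h subH by blast
          have "f v \<in> I" using I v by blast
          thus "v \<in> g I" using fv[OF vH] I(1) unfolding A_set_def by blast
        qed
        moreover have "g I \<in> max_indep VH EH" using g I by blast
        ultimately show False using h by (auto simp: max_indep_def independent_def)
      qed
    qed
    thus "\<exists>f. hyp_hom VH EH VF EF f" using fv unfolding hyp_hom_def by blast
  }
qed

end
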